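(* Let $\kappa\ge2$. Every tensor $P$ in $\mathrm{EE}_\kappa(((a,b),c))$ lies in the algebraic variety defined by the degree-$(2\kappa+1)$ polynomials given by all $(2\kappa+1)\times(2\kappa+1)$ minors of each of the $2\kappa$ matrices (for $k\in[\kappa]$) $$\begin{pmatrix}0&P_{\cdot\cdot k}&P_{\cdot+\cdot}\\-P_{\cdot\cdot k}^T&0&P_{+\cdot\cdot}\\-P_{\cdot+\cdot}^T&-P_{+\cdot\cdot}^T&0\end{pmatrix}\quad\text{and}\quad\begin{pmatrix}0&P_{\cdot+\cdot}^T&P_{+\cdot\cdot}^T\\-P_{\cdot+\cdot}&0&P_{\cdot\cdot k}\\-P_{+\cdot\cdot}&-P_{\cdot\cdot k}^T&0\end{pmatrix}.$$ That is, each of these $3\kappa\times 3\kappa$ matrices has rank at most $2\kappa$.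
   Context: A $\kappa$-state site pattern probability tensor on $X$ ($|X|=n$) is an $n$-way $\kappa\times\cdots\times\kappa$ array with one index per taxon, non-negative entries summing to 1. $P_Y$ is the marginalization to $Y\subseteq X$; $\psi^+|_Y$ is the induced rooted subtree; a 2-clade is a pair of leaves that are exactly the leaf descendants of some vertex. $\mathrm{UE}_\kappa(\psi^+)$: all such tensors $P$ such that for every $Y\subseteq X$ and every 2-clade $\{x,y\}$ of $\psi^+|_Y$, $P_Y$ is invariant under exchanging the $x$ and $y$ indices. For a $\kappa\times\kappa$ matrix $M$, $P*_kM$ is the tensor whose entry at $(i_1,\dots,i_n)$ is the $i_k$-th entry of $vM$, $v$ the row vector obtained by fixing all indices $\ell\ne k$ to $i_\ell$; $P*(M_1,\dots,M_n)=(\cdots(P*_1M_1)\cdots)*_nM_n$. $\mathrm{EE}_\kappa(\psi^+)$: all $\kappa$-state site pattern probability tensors $P$ such that $P*(M_1,\dots,M_n)=\tilde P$ for some non-singular Markov matrices $M_i$ and some non-negative $\tilde P\in\mathrm{UE}_\kappa(\psi^+)$. For a 3-way tensor $P=(p_{ijk})$ with indices ordered $a,b,c$: $P_{+\cdot\cdot}$ has $(j,k)$-entry $\sum_ip_{ijk}$; $P_{\cdot+\cdot}$ has $(i,k)$-entry $\sum_jp_{ijk}$; $P_{\cdot\cdot k}$ has $(i,j)$-entry $p_{ijk}$; $^T$ is transpose. *)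

theory Defs
  imports "HOL-Analysis.Analysis"
begin

text \<open>Taxa form a finite type 'x (X = UNIV), states a finite type 'k with kappa = CARD('k).
  A tensor assigns a real number to each index assignment (one state per taxon).\<close>

type_synonym ('x, 'k) tensor = "('x \<Rightarrow> 'k) \<Rightarrow> real"

definition ptensor :: "('x::finite, 'k::finite) tensor \<Rightarrow> bool" where
  "ptensor P \<longleftrightarrow> (\<forall>i. 0 \<le> P i) \<and> (\<Sum>i\<in>UNIV. P i) = 1"

text \<open>Marginalization to Y: the value depends only on the restriction of j to Y.\<close>
definition marg :: "('x::finite, 'k::finite) tensor \<Rightarrow> 'x set \<Rightarrow> ('x, 'k) tensor" where
  "marg P Y j = (\<Sum>i\<in>{i. \<forall>y\<in>Y. i y = j y}. P i)"

text \<open>A rooted X-tree is represented by its set of clusters (leaf-descendant sets of vertices).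
  The clusters of the induced (degree-2 suppressed) subtree on Y are the nonempty
  intersections of clusters with Y.\<close>

definition induced_clusters :: "'x set set \<Rightarrow> 'x set \<Rightarrow> 'x set set" where
  "induced_clusters H Y = {C \<inter> Y | C. C \<in> H} - {{}}"

definition two_clade :: "'x set set \<Rightarrow> 'x set \<Rightarrow> 'x \<Rightarrow> 'x \<Rightarrow> bool" where
  "two_clade H Y x y \<longleftrightarrow> x \<noteq> y \<and> {x, y} \<in> induced_clusters H Y"

definition UE :: "'x set set \<Rightarrow> ('x::finite, 'k::finite) tensor set" where
  "UE H = {P. ptensor P \<and>
     (\<forall>Y x y. two_clade H Y x y \<longrightarrow>
        (\<forall>j. marg P Y j = marg P Y (j \<circ> Transposition.transpose x y)))}"

definition markov :: "real^'k^'k \<Rightarrow> bool" where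
  "markov M \<longleftrightarrow> (\<forall>r c. 0 \<le> M $ r $ c) \<and> (\<forall>r. (\<Sum>c\<in>UNIV. M $ r $ c) = 1)"

text \<open>P * (M_x)_x: each index x is acted on by the row-vector product v M_x;
  written out as one sum (the single-index actions commute).\<close>
definition act :: "('x::finite, 'k::finite) tensor \<Rightarrow> ('x \<Rightarrow> real^'k^'k) \<Rightarrow> ('x, 'k) tensor" where
  "act P M i = (\<Sum>j\<in>UNIV. P j * (\<Prod>x\<in>UNIV. M x $ (j x) $ (i x)))"

definition EE :: "'x set set \<Rightarrow> ('x::finite, 'k::finite) tensor set" where
  "EE H = {P. ptensor P \<and> (\<exists>M Pt. (\<forall>x. markov (M x) \<and> invertible (M x)) \<and>
      (\<forall>i. 0 \<le> Pt i) \<and> Pt \<in> UE H \<and> act P M = Pt)}"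

datatype taxon = Ta | Tb | Tc

lemma UNIV_taxon: "(UNIV :: taxon set) = {Ta, Tb, Tc}"
  using taxon.exhaust by auto

instance taxon :: finite
  by standard (simp add: UNIV_taxon)

definition tree_ab_c :: "taxon set set" where
  "tree_ab_c = {{Ta}, {Tb}, {Tc}, {Ta, Tb}, {Ta, Tb, Tc}}"

definition ent :: "(taxon, 'k) tensor \<Rightarrow> 'k \<Rightarrow> 'k \<Rightarrow> 'k \<Rightarrow> real" where
  "ent P i j k = P (\<lambda>t. case t of Ta \<Rightarrow> i | Tb \<Rightarrow> j | Tc \<Rightarrow> k)"

text \<open>P_{..k}: (i,j) entry p_ijk; P_{.+.}: (i,k) entry sum_j p_ijk; P_{+..}: (j,k) entry sum_i p_ijk.\<close>
definition slice :: "(taxon, 'k::finite) tensor \<Rightarrow> 'k \<Rightarrow> real^'k^'k" where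
  "slice P k = (\<chi> i j. ent P i j k)"
definition margB :: "(taxon, 'k::finite) tensor \<Rightarrow> real^'k^'k" where
  "margB P = (\<chi> i k. \<Sum>j\<in>UNIV. ent P i j k)"
definition margA :: "(taxon, 'k::finite) tensor \<Rightarrow> real^'k^'k" where
  "margA P = (\<chi> j k. \<Sum>i\<in>UNIV. ent P i j k)"

text \<open>Block matrix [[0,X,Y],[-X^T,0,Z],[-Y^T,-Z^T,0]], index type 'k + 'k + 'k.\<close>
definition skew3 :: "real^'k^'k \<Rightarrow> real^'k^'k \<Rightarrow> real^'k^'k \<Rightarrow> real^('k + 'k + 'k)^('k + 'k + 'k)" where
  "skew3 X Y Z = (\<chi> r c. case (r, c) of
       (Inl i, Inr (Inl j)) \<Rightarrow> X $ i $ j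
     | (Inl i, Inr (Inr j)) \<Rightarrow> Y $ i $ j
     | (Inr (Inl i), Inl j) \<Rightarrow> - X $ j $ i
     | (Inr (Inl i), Inr (Inr j)) \<Rightarrow> Z $ i $ j
     | (Inr (Inr i), Inl j) \<Rightarrow> - Y $ j $ i
     | (Inr (Inr i), Inr (Inl j)) \<Rightarrow> - Z $ j $ i
     | _ \<Rightarrow> 0)"

end

theory Submission
  imports Defs
begin


lemma rank_null:
  fixes A :: "real^'n^'m"
  shows "dim {x. A *v x = 0} + rank A = CARD('n)"
proof -
  have sub: "subspace (span (rows A))" by simp
  have eq: "{y \<in> UNIV. \<forall>x \<in> span (rows A). orthogonal x y} = {x. A *v x = 0}"
  proof (safe)
    fix y assume h: "\<forall>x \<in> span (rows A). orthogonal x y"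
    show "A *v y = 0"
    proof (subst vec_eq_iff, intro allI)
      fix k
      have "row k A \<in> span (rows A)" by (auto simp: rows_def intro: span_base)
      then have "orthogonal (row k A) y" using h by blast
      moreover have "row k A = A $ k" by (simp add: row_def vec_eq_iff)
      ultimately show "(A *v y) $ k = 0 $ k" by (simp add: matrix_vector_mul_component orthogonal_def)
    qed
  next
    fix y x assume h: "A *v y = 0" "x \<in> span (rows A)"
    have "orthogonal y z" if zr: "z \<in> rows A" for z
    proof -
      obtain k where "z = row k A" using zr unfolding rows_def by blast
      moreover have "row k A = A $ k" by (simp add: row_def vec_eq_iff)
      moreover have "(A *v y) $ k = 0" using h by simp
      ultimately show ?thesis by (simp add: matrix_vector_mul_component orthogonal_def inner_commute)
    qed
    then have "orthogonal y x" using orthogonal_to_span[OF h(2)] by blast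
    then show "orthogonal x y" by (simp add: orthogonal_commute)
  qed simp
  have "dim {y \<in> UNIV. \<forall>x \<in> span (rows A). orthogonal x y} + dim (span (rows A)) = dim (UNIV :: (real^'n) set)"
    by (rule dim_subspace_orthogonal_to_vectors) auto
  then show ?thesis using eq by (simp add: row_rank_def)
qed

lemma sum_UNIV_plus:
  fixes f :: "('a::finite + 'b::finite) \<Rightarrow> 'c::comm_monoid_add"
  shows "(\<Sum>s\<in>UNIV. f s) = (\<Sum>i\<in>UNIV. f (Inl i)) + (\<Sum>i\<in>UNIV. f (Inr i))"
  using sum.Plus[of "UNIV::'a set" "UNIV::'b set" f] by (simp add: o_def)

definition vec3 :: "real^'k \<Rightarrow> real^'k \<Rightarrow> real^'k \<Rightarrow> real^('k + 'k + 'k)" where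
  "vec3 p q r = (\<chi> s. case s of Inl i \<Rightarrow> p $ i | Inr (Inl i) \<Rightarrow> q $ i | Inr (Inr i) \<Rightarrow> r $ i)"

lemma skew3_mult:
  fixes X Y Z :: "real^'k^'k"
  shows "skew3 X Y Z *v vec3 p q r = vec3 (X *v q + Y *v r) (Z *v r - transpose X *v p) (-(transpose Y *v p) - transpose Z *v q)"
  unfolding vec_eq_iff
proof
  fix s :: "'k + 'k + 'k"
  show "(skew3 X Y Z *v vec3 p q r) $ s = vec3 (X *v q + Y *v r) (Z *v r - transpose X *v p) (-(transpose Y *v p) - transpose Z *v q) $ s"
  proof (cases s)
    case (Inl i) then show ?thesis
      by (simp add: matrix_vector_mult_def skew3_def vec3_def sum_UNIV_plus transpose_def sum_negf)
  next
    case (Inr t) then show ?thesis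
      by (cases t) (simp_all add: matrix_vector_mult_def skew3_def vec3_def sum_UNIV_plus transpose_def sum_negf sum_subtractf)
  qed
qed

definition lft :: "real^('k + 'k) \<Rightarrow> real^'k" where "lft w = (\<chi> i. w $ Inl i)"
definition rgt :: "real^('k + 'k) \<Rightarrow> real^'k" where "rgt w = (\<chi> i. w $ Inr i)"
definition cat2 :: "real^'k^'k \<Rightarrow> real^'k^'k \<Rightarrow> real^('k + 'k)^'k" where
  "cat2 S T = (\<chi> i s. case s of Inl j \<Rightarrow> S $ i $ j | Inr j \<Rightarrow> T $ i $ j)"

lemma cat2_mult: "cat2 S T *v w = S *v lft w + T *v rgt w"
  by (simp add: vec_eq_iff cat2_def matrix_vector_mult_def sum_UNIV_plus lft_def rgt_def)

lemma vec3_comp [simp]: "vec3 p q r $ Inl i = p $ i" "vec3 p q r $ Inr (Inl i) = q $ i"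
  "vec3 p q r $ Inr (Inr i) = r $ i"
  by (simp_all add: vec3_def)
lemma vec3_eq: "vec3 p q r = vec3 p' q' r' \<longleftrightarrow> p = p' \<and> q = q' \<and> r = r'"
proof
  assume h: "vec3 p q r = vec3 p' q' r'"
  have "\<And>i. vec3 p q r $ Inl i = vec3 p' q' r' $ Inl i" "\<And>i. vec3 p q r $ Inr (Inl i) = vec3 p' q' r' $ Inr (Inl i)"
    "\<And>i. vec3 p q r $ Inr (Inr i) = vec3 p' q' r' $ Inr (Inr i)" using h by simp_all
  then show "p = p' \<and> q = q' \<and> r = r'" by (simp add: vec_eq_iff)
qed simp
lemma vec3_0: "(0::real^('k::finite + 'k + 'k)) = vec3 0 0 0"
  by (simp add: vec3_def vec_eq_iff split: sum.split)
lemma vec3_add: "vec3 p q r + vec3 p' q' r' = vec3 (p + p') (q + q') (r + r')"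
  unfolding vec_eq_iff vec3_def by (auto split: sum.split)
lemma vec3_scale: "c *\<^sub>R vec3 p q r = vec3 (c *\<^sub>R p) (c *\<^sub>R q) (c *\<^sub>R r)"
  unfolding vec_eq_iff vec3_def by (auto split: sum.split)
lemma lft_add: "lft (a + b) = lft a + lft b" and rgt_add: "rgt (a + b) = rgt a + rgt b"
  and lft_scale: "lft (c *\<^sub>R a) = c *\<^sub>R lft a" and rgt_scale: "rgt (c *\<^sub>R a) = c *\<^sub>R rgt a"
  by (simp_all add: lft_def rgt_def vec_eq_iff)
lemma lr_eq: "lft a = lft b \<Longrightarrow> rgt a = rgt b \<Longrightarrow> a = b"
proof -
  assume "lft a = lft b" "rgt a = rgt b"
  then have "\<And>i. a $ Inl i = b $ Inl i" "\<And>i. a $ Inr i = b $ Inr i" by (simp_all add: lft_def rgt_def vec_eq_iff)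
  then show "a = b" unfolding vec_eq_iff by (metis sum.exhaust)
qed

lemma inv_cancel:
  fixes M :: "real^'k^'k"
  assumes "invertible M" "transpose M *v u = 0" shows "u = 0"
proof -
  have "inj ((*v) (transpose M))" by (rule inj_matrix_vector_mult[OF transpose_invertible[OF assms(1)]])
  then show ?thesis using assms(2) by (metis injD matrix_vector_mult_0_right)
qed

lemma null_dim:
  fixes S T :: "real^'k::finite^'k"
  shows "dim {w. cat2 S T *v w = 0} \<ge> CARD('k)"
proof -
  have "dim {w. cat2 S T *v w = 0} + rank (cat2 S T) = CARD('k + 'k)" by (rule rank_null)
  moreover have "rank (cat2 S T) \<le> CARD('k)" using rank_bound[of "cat2 S T"] by simp
  ultimately show ?thesis by simp
qed

lemma rank_from_kernel:
  fixes G :: "real^('k::finite + 'k + 'k)^('k + 'k + 'k)" and L :: "real^('k + 'k) \<Rightarrow> real^('k + 'k + 'k)"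
  assumes lin: "linear L" and inj: "inj L" and sub: "\<And>w. cat2 S T *v w = 0 \<Longrightarrow> G *v L w = 0"
  shows "rank G \<le> 2 * CARD('k)"
proof -
  have "dim (L ` {w. cat2 S T *v w = 0}) = dim {w. cat2 S T *v w = 0}"
    by (rule dim_image_eq[OF lin]) (use inj in \<open>auto simp: inj_on_def inj_def\<close>)
  moreover have "dim (L ` {w. cat2 S T *v w = 0}) \<le> dim {v. G *v v = 0}"
    by (rule dim_subset) (auto intro: sub)
  moreover have "dim {v. G *v v = 0} + rank G = CARD('k + 'k + 'k)" by (rule rank_null)
  ultimately show ?thesis using null_dim[of S T] by simp
qed

lemma mv_neg: "(A::real^'n^'m) *v (- x) = - (A *v x)"
  by (simp add: vec_eq_iff matrix_vector_mult_def sum_negf)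

lemma core:
  fixes X Y Z S T Ma Mb Mc :: "real^'k::finite^'k"
  assumes iA: "invertible Ma" and iB: "invertible Mb" and iC: "invertible Mc"
    and sS: "transpose S = S" and sT: "transpose T = T"
    and hX: "transpose Ma ** X ** Mb = S" and hY: "transpose Ma ** Y ** Mc = T"
    and hZ: "transpose Mb ** Z ** Mc = T"
  shows "rank (skew3 X Y Z) \<le> 2 * CARD('k) \<and> rank (skew3 (transpose Y) (transpose Z) X) \<le> 2 * CARD('k)"
proof
  have hX': "transpose Mb ** transpose X ** Ma = S"
    using arg_cong[OF hX, of transpose] sS by (simp add: matrix_transpose_mul matrix_mul_assoc matrix_vector_mult_diff_distrib mv_neg del: transpose_matrix_vector)
  have hY': "transpose Mc ** transpose Y ** Ma = T"
    using arg_cong[OF hY, of transpose] sT by (simp add: matrix_transpose_mul matrix_mul_assoc matrix_vector_mult_diff_distrib mv_neg del: transpose_matrix_vector)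
  have hZ': "transpose Mc ** transpose Z ** Mb = T"
    using arg_cong[OF hZ, of transpose] sT by (simp add: matrix_transpose_mul matrix_mul_assoc matrix_vector_mult_diff_distrib mv_neg del: transpose_matrix_vector)
  have lin1: "linear (\<lambda>w. vec3 (-(Ma *v lft w)) (Mb *v lft w) (Mc *v rgt w))"
    by (rule linearI) (simp_all add: vec3_add vec3_scale lft_add rgt_add lft_scale rgt_scale
        matrix_vector_right_distrib matrix_vector_mult_scaleR)
  have inj1: "inj (\<lambda>w. vec3 (-(Ma *v lft w)) (Mb *v lft w) (Mc *v rgt w))"
  proof (rule injI)
    fix a b assume "vec3 (-(Ma *v lft a)) (Mb *v lft a) (Mc *v rgt a) = vec3 (-(Ma *v lft b)) (Mb *v lft b) (Mc *v rgt b)"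
    then have "Mb *v lft a = Mb *v lft b" "Mc *v rgt a = Mc *v rgt b" by (simp_all add: vec3_eq)
    then show "a = b" using inj_matrix_vector_mult[OF iB] inj_matrix_vector_mult[OF iC]
      by (meson injD lr_eq)
  qed
  show "rank (skew3 X Y Z) \<le> 2 * CARD('k)"
  proof (rule rank_from_kernel[OF lin1 inj1])
    fix w assume "cat2 S T *v w = 0"
    then have e: "S *v lft w + T *v rgt w = 0" by (simp add: cat2_mult)
    define y where "y = lft w"
    define z where "z = rgt w"
    have e': "S *v y + T *v z = 0" using e by (simp add: y_def z_def)
    have c1: "X *v (Mb *v y) + Y *v (Mc *v z) = 0"
      by (rule inv_cancel[OF iA]) (simp add: matrix_vector_right_distrib matrix_vector_mul_assoc hX hY e' matrix_mul_assoc matrix_vector_mult_diff_distrib mv_neg del: transpose_matrix_vector)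
    have c2: "Z *v (Mc *v z) - transpose X *v (-(Ma *v y)) = 0"
      by (rule inv_cancel[OF iB]) (simp add: matrix_vector_right_distrib matrix_vector_mul_assoc hX' hZ e' add.commute matrix_mul_assoc matrix_vector_mult_diff_distrib mv_neg del: transpose_matrix_vector)
    have c3: "-(transpose Y *v (-(Ma *v y))) - transpose Z *v (Mb *v y) = 0"
      by (rule inv_cancel[OF iC]) (simp add: matrix_vector_right_distrib matrix_vector_mul_assoc hY' hZ' matrix_mul_assoc matrix_vector_mult_diff_distrib mv_neg del: transpose_matrix_vector)
    show "skew3 X Y Z *v vec3 (-(Ma *v lft w)) (Mb *v lft w) (Mc *v rgt w) = 0"
      unfolding skew3_mult y_def[symmetric] z_def[symmetric] c1 c2 c3 vec3_0 ..
  qed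
  have lin2: "linear (\<lambda>w. vec3 (Mc *v rgt w) (Ma *v lft w) (-(Mb *v lft w)))"
    by (rule linearI) (simp_all add: vec3_add vec3_scale lft_add rgt_add lft_scale rgt_scale
        matrix_vector_right_distrib matrix_vector_mult_scaleR)
  have inj2: "inj (\<lambda>w. vec3 (Mc *v rgt w) (Ma *v lft w) (-(Mb *v lft w)))"
  proof (rule injI)
    fix a b assume "vec3 (Mc *v rgt a) (Ma *v lft a) (-(Mb *v lft a)) = vec3 (Mc *v rgt b) (Ma *v lft b) (-(Mb *v lft b))"
    then have "Ma *v lft a = Ma *v lft b" "Mc *v rgt a = Mc *v rgt b" by (simp_all add: vec3_eq)
    then show "a = b" using inj_matrix_vector_mult[OF iA] inj_matrix_vector_mult[OF iC]
      by (meson injD lr_eq)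
  qed
  show "rank (skew3 (transpose Y) (transpose Z) X) \<le> 2 * CARD('k)"
  proof (rule rank_from_kernel[OF lin2 inj2])
    fix w assume "cat2 S T *v w = 0"
    then have e: "S *v lft w + T *v rgt w = 0" by (simp add: cat2_mult)
    define y where "y = lft w"
    define z where "z = rgt w"
    have e': "S *v y + T *v z = 0" using e by (simp add: y_def z_def)
    have e3: "- (S *v y) = T *v z" using e' by (simp add: add_eq_0_iff)
    have e4: "- (T *v z) = S *v y" using e3 by (metis minus_minus)
    have c1: "transpose Y *v (Ma *v y) + transpose Z *v (-(Mb *v y)) = 0"
      by (rule inv_cancel[OF iC]) (simp add: matrix_vector_right_distrib matrix_vector_mul_assoc hY' hZ' matrix_mul_assoc matrix_vector_mult_diff_distrib mv_neg del: transpose_matrix_vector)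
    have c2: "X *v (-(Mb *v y)) - transpose (transpose Y) *v (Mc *v z) = 0"
      by (rule inv_cancel[OF iA]) (simp add: matrix_vector_right_distrib matrix_vector_mul_assoc hX hY e' e3 matrix_mul_assoc matrix_vector_mult_diff_distrib mv_neg del: transpose_matrix_vector)
    have c3: "-(transpose (transpose Z) *v (Mc *v z)) - transpose X *v (Ma *v y) = 0"
      by (rule inv_cancel[OF iB]) (simp add: matrix_vector_right_distrib matrix_vector_mul_assoc hX' hZ e' e4 matrix_mul_assoc matrix_vector_mult_diff_distrib mv_neg del: transpose_matrix_vector)
    show "skew3 (transpose Y) (transpose Z) X *v vec3 (Mc *v rgt w) (Ma *v lft w) (-(Mb *v lft w)) = 0"
      unfolding skew3_mult y_def[symmetric] z_def[symmetric] c1 c2 c3 vec3_0 ..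
  qed
qed



definition mk :: "'k \<Rightarrow> 'k \<Rightarrow> 'k \<Rightarrow> taxon \<Rightarrow> 'k" where
  "mk i j k = (\<lambda>t. case t of Ta \<Rightarrow> i | Tb \<Rightarrow> j | Tc \<Rightarrow> k)"

lemma mk_app [simp]: "mk i j k Ta = i" "mk i j k Tb = j" "mk i j k Tc = k"
  by (simp_all add: mk_def)

lemma mk_eta: "mk (f Ta) (f Tb) (f Tc) = f"
  by (rule ext, case_tac x) simp_all

lemma mk_eq: "mk i j k = mk i' j' k' \<longleftrightarrow> i = i' \<and> j = j' \<and> k = k'"
  by (metis mk_app)

lemma ent_mk: "ent P i j k = P (mk i j k)"
  by (simp add: ent_def mk_def)

lemma sum_fun3:
  fixes g :: "(taxon \<Rightarrow> 'k::finite) \<Rightarrow> real"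
  shows "(\<Sum>f\<in>UNIV. g f) = (\<Sum>i\<in>UNIV. \<Sum>j\<in>UNIV. \<Sum>k\<in>UNIV. g (mk i j k))"
proof -
  have "(\<Sum>f\<in>UNIV. g f) = (\<Sum>p\<in>UNIV. g (mk (fst p) (fst (snd p)) (snd (snd p))))"
    by (rule sum.reindex_bij_witness[where i="\<lambda>p. mk (fst p) (fst (snd p)) (snd (snd p))"
          and j="\<lambda>f. (f Ta, f Tb, f Tc)"]) (auto simp: mk_eta)
  also have "\<dots> = (\<Sum>i\<in>UNIV. \<Sum>p\<in>UNIV. g (mk i (fst p) (snd p)))"
    by (simp add: sum.cartesian_product UNIV_Times_UNIV[symmetric] case_prod_beta del: UNIV_Times_UNIV)
  also have "\<dots> = (\<Sum>i\<in>UNIV. \<Sum>j\<in>UNIV. \<Sum>k\<in>UNIV. g (mk i j k))"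
    by (simp add: sum.cartesian_product UNIV_Times_UNIV[symmetric] case_prod_beta del: UNIV_Times_UNIV)
  finally show ?thesis .
qed

lemma act_ent:
  fixes P :: "(taxon, 'k::finite) tensor"
  shows "ent (act P M) i j k = (\<Sum>i'\<in>UNIV. \<Sum>j'\<in>UNIV. \<Sum>k'\<in>UNIV.
     ent P i' j' k' * (M Ta $ i' $ i * M Tb $ j' $ j * M Tc $ k' $ k))"
  unfolding ent_mk act_def sum_fun3[where g = "\<lambda>f. P f * (\<Prod>x\<in>UNIV. M x $ f x $ mk i j k x)"]
  by (simp add: UNIV_taxon mult.assoc)

lemma marg_ac:
  fixes P :: "(taxon, 'k::finite) tensor"
  shows "marg P {Ta, Tc} (mk i j k) = (\<Sum>j'\<in>UNIV. ent P i j' k)"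
  unfolding marg_def ent_mk
  by (rule sum.reindex_bij_witness[where i="\<lambda>j'. mk i j' k" and j="\<lambda>f. f Tb"])
     (auto simp: mk_eta mk_eq)

lemma marg_UNIV: "marg P UNIV f = P f"
proof -
  have "{i. \<forall>y\<in>UNIV. i y = f y} = {f}" by auto
  then show ?thesis by (simp add: marg_def)
qed

lemma swap_ab: "mk i j k \<circ> Transposition.transpose Ta Tb = mk j i k"
  by (rule ext, case_tac x) (simp_all add: Transposition.transpose_def)
lemma swap_ac: "mk i j k \<circ> Transposition.transpose Ta Tc = mk k j i"
  by (rule ext, case_tac x) (simp_all add: Transposition.transpose_def)

lemma clade_ab: "two_clade tree_ab_c UNIV Ta Tb"
  unfolding two_clade_def induced_clusters_def tree_ab_c_def by blast
lemma clade_ac: "two_clade tree_ab_c {Ta, Tc} Ta Tc"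
  unfolding two_clade_def induced_clusters_def tree_ab_c_def by blast



lemma re1:
  fixes f :: "'a::finite \<Rightarrow> 'b::finite \<Rightarrow> 'c::finite \<Rightarrow> real"
  shows "(\<Sum>k\<in>UNIV. (\<Sum>a\<in>UNIV. \<Sum>b\<in>UNIV. \<Sum>c\<in>UNIV. f a b c * (g a * h b * m c k)) * n k)
    = (\<Sum>a\<in>UNIV. \<Sum>b\<in>UNIV. \<Sum>c\<in>UNIV. f a b c * g a * h b * (\<Sum>k\<in>UNIV. m c k * n k))"
proof -
  have "(\<Sum>k\<in>UNIV. (\<Sum>a\<in>UNIV. \<Sum>b\<in>UNIV. \<Sum>c\<in>UNIV. f a b c * (g a * h b * m c k)) * n k)
     = (\<Sum>k\<in>UNIV. \<Sum>a\<in>UNIV. \<Sum>b\<in>UNIV. \<Sum>c\<in>UNIV. f a b c * g a * h b * (m c k * n k))"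
    unfolding sum_distrib_right by (simp add: mult_ac)
  also have "\<dots> = (\<Sum>a\<in>UNIV. \<Sum>k\<in>UNIV. \<Sum>b\<in>UNIV. \<Sum>c\<in>UNIV. f a b c * g a * h b * (m c k * n k))"
    by (rule sum.swap)
  also have "\<dots> = (\<Sum>a\<in>UNIV. \<Sum>b\<in>UNIV. \<Sum>k\<in>UNIV. \<Sum>c\<in>UNIV. f a b c * g a * h b * (m c k * n k))"
    by (rule sum.cong[OF refl], rule sum.swap)
  also have "\<dots> = (\<Sum>a\<in>UNIV. \<Sum>b\<in>UNIV. \<Sum>c\<in>UNIV. \<Sum>k\<in>UNIV. f a b c * g a * h b * (m c k * n k))"
    by (rule sum.cong[OF refl], rule sum.cong[OF refl], rule sum.swap)
  also have "\<dots> = (\<Sum>a\<in>UNIV. \<Sum>b\<in>UNIV. \<Sum>c\<in>UNIV. f a b c * g a * h b * (\<Sum>k\<in>UNIV. m c k * n k))"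
    by (simp add: sum_distrib_left)
  finally show ?thesis .
qed



lemma swap4:
  fixes F :: "'k::finite \<Rightarrow> 'a::finite \<Rightarrow> 'b::finite \<Rightarrow> 'c::finite \<Rightarrow> real"
  shows "(\<Sum>k\<in>UNIV. \<Sum>a\<in>UNIV. \<Sum>b\<in>UNIV. \<Sum>c\<in>UNIV. F k a b c) = (\<Sum>a\<in>UNIV. \<Sum>b\<in>UNIV. \<Sum>c\<in>UNIV. \<Sum>k\<in>UNIV. F k a b c)"
proof -
  have "(\<Sum>k\<in>UNIV. \<Sum>a\<in>UNIV. \<Sum>b\<in>UNIV. \<Sum>c\<in>UNIV. F k a b c) = (\<Sum>a\<in>UNIV. \<Sum>k\<in>UNIV. \<Sum>b\<in>UNIV. \<Sum>c\<in>UNIV. F k a b c)"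
    by (rule sum.swap)
  also have "\<dots> = (\<Sum>a\<in>UNIV. \<Sum>b\<in>UNIV. \<Sum>k\<in>UNIV. \<Sum>c\<in>UNIV. F k a b c)"
    by (rule sum.cong[OF refl], rule sum.swap)
  also have "\<dots> = (\<Sum>a\<in>UNIV. \<Sum>b\<in>UNIV. \<Sum>c\<in>UNIV. \<Sum>k\<in>UNIV. F k a b c)"
    by (rule sum.cong[OF refl], rule sum.cong[OF refl], rule sum.swap)
  finally show ?thesis .
qed

lemma swap3:
  fixes F :: "'a::finite \<Rightarrow> 'b::finite \<Rightarrow> 'c::finite \<Rightarrow> real"
  shows "(\<Sum>c\<in>UNIV. \<Sum>a\<in>UNIV. \<Sum>b\<in>UNIV. F a b c) = (\<Sum>a\<in>UNIV. \<Sum>b\<in>UNIV. \<Sum>c\<in>UNIV. F a b c)"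
proof -
  have "(\<Sum>c\<in>UNIV. \<Sum>a\<in>UNIV. \<Sum>b\<in>UNIV. F a b c) = (\<Sum>a\<in>UNIV. \<Sum>c\<in>UNIV. \<Sum>b\<in>UNIV. F a b c)"
    by (rule sum.swap)
  also have "\<dots> = (\<Sum>a\<in>UNIV. \<Sum>b\<in>UNIV. \<Sum>c\<in>UNIV. F a b c)"
    by (rule sum.cong[OF refl], rule sum.swap)
  finally show ?thesis .
qed

lemma delta_mult: "(\<Sum>c\<in>UNIV. f c * (if c = k0 then (1::real) else 0)) = f (k0::'k::finite)"
proof -
  have "(\<lambda>c. f c * (if c = k0 then (1::real) else 0)) = (\<lambda>c. if c = k0 then f c else 0)" by auto
  then show ?thesis by (simp only: sum.delta) simp
qed

theorem corollary6p4:
  fixes P :: "(taxon, 'k::finite) tensor"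
  assumes "CARD('k) \<ge> 2"
    and "P \<in> EE tree_ab_c"
  shows "\<forall>k. rank (skew3 (slice P k) (margB P) (margA P)) \<le> 2 * CARD('k)
          \<and> rank (skew3 (transpose (margB P)) (transpose (margA P)) (slice P k)) \<le> 2 * CARD('k)"
proof
  fix k0 :: 'k
  obtain M Pt where hM: "\<And>x. markov (M x) \<and> invertible (M x)" and UE: "Pt \<in> UE tree_ab_c"
    and hact: "act P M = Pt"
    using assms(2) unfolding EE_def by blast
  define Ma where "Ma = M Ta"
  define Mb where "Mb = M Tb"
  define Mc where "Mc = M Tc"
  have iA: "invertible Ma" and iB: "invertible Mb" and iC: "invertible Mc"
    using hM by (simp_all add: Ma_def Mb_def Mc_def)
  have rA: "\<And>r. (\<Sum>c\<in>UNIV. Ma $ r $ c) = 1" and rB: "\<And>r. (\<Sum>c\<in>UNIV. Mb $ r $ c) = 1"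
    using hM by (simp_all add: Ma_def Mb_def markov_def)
  obtain N where MN: "Mc ** N = mat 1" using iC unfolding invertible_def by blast
  have MNe: "(\<Sum>k\<in>UNIV. Mc $ c $ k * N $ k $ k0) = (if c = k0 then 1 else 0)" for c
    using arg_cong[OF MN, of "\<lambda>A. A $ c $ k0"] by (simp add: matrix_matrix_mult_def mat_def)
  have E: "ent Pt i j k = (\<Sum>a\<in>UNIV. \<Sum>b\<in>UNIV. \<Sum>c\<in>UNIV.
     ent P a b c * (Ma $ a $ i * Mb $ b $ j * Mc $ c $ k))" for i j k
    unfolding hact[symmetric] act_ent Ma_def Mb_def Mc_def ..
  have sab: "ent Pt i j k = ent Pt j i k" for i j k
  proof -
    have "\<forall>f. marg Pt UNIV f = marg Pt UNIV (f \<circ> Transposition.transpose Ta Tb)"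
      using UE clade_ab unfolding UE_def by blast
    from spec[OF this, of "mk i j k"] show ?thesis by (simp add: marg_UNIV swap_ab ent_mk)
  qed
  have sac: "(\<Sum>j\<in>UNIV. ent Pt i j k) = (\<Sum>j\<in>UNIV. ent Pt k j i)" for i k
  proof -
    have "\<forall>f. marg Pt {Ta, Tc} f = marg Pt {Ta, Tc} (f \<circ> Transposition.transpose Ta Tc)"
      using UE clade_ac unfolding UE_def by blast
    from spec[OF this, of "mk i k k"] show ?thesis by (simp add: marg_ac swap_ac)
  qed
  define S where "S = (\<chi> i j. \<Sum>k\<in>UNIV. ent Pt i j k * N $ k $ k0)"
  define T where "T = (\<chi> i k. \<Sum>j\<in>UNIV. ent Pt i j k)"
  have sS: "transpose S = S" unfolding S_def transpose_def vec_eq_iff using sab by simp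
  have sT: "transpose T = T" unfolding T_def transpose_def vec_eq_iff using sac by simp
  have hX: "transpose Ma ** slice P k0 ** Mb = S"
  proof (simp add: vec_eq_iff, intro allI)
    fix i j
    have "(transpose Ma ** slice P k0 ** Mb) $ i $ j = (\<Sum>l\<in>UNIV. \<Sum>m\<in>UNIV. ent P m l k0 * Ma $ m $ i * Mb $ l $ j)"
      by (simp add: matrix_matrix_mult_def transpose_def slice_def sum_distrib_left sum_distrib_right mult_ac)
    also have "\<dots> = (\<Sum>m\<in>UNIV. \<Sum>l\<in>UNIV. ent P m l k0 * Ma $ m $ i * Mb $ l $ j)"
      by (rule sum.swap)
    also have "\<dots> = (\<Sum>a\<in>UNIV. \<Sum>b\<in>UNIV. \<Sum>c\<in>UNIV. ent P a b c * Ma $ a $ i * Mb $ b $ j * (\<Sum>k\<in>UNIV. Mc $ c $ k * N $ k $ k0))"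
      by (simp add: MNe delta_mult)
    also have "\<dots> = S $ i $ j"
      unfolding S_def E by (simp add: re1)
    finally show "(transpose Ma ** slice P k0 ** Mb) $ i $ j = S $ i $ j" .
  qed
  have hY: "transpose Ma ** margB P ** Mc = T"
  proof (simp add: vec_eq_iff, intro allI)
    fix i k
    have "(transpose Ma ** margB P ** Mc) $ i $ k = (\<Sum>c\<in>UNIV. \<Sum>a\<in>UNIV. \<Sum>b\<in>UNIV. ent P a b c * Ma $ a $ i * Mc $ c $ k)"
      by (simp add: matrix_matrix_mult_def transpose_def margB_def sum_distrib_left sum_distrib_right mult_ac)
    also have "\<dots> = (\<Sum>a\<in>UNIV. \<Sum>b\<in>UNIV. \<Sum>c\<in>UNIV. ent P a b c * Ma $ a $ i * Mc $ c $ k * (\<Sum>j\<in>UNIV. Mb $ b $ j))"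
      by (subst swap3) (simp add: rB)
    also have "\<dots> = (\<Sum>a\<in>UNIV. \<Sum>b\<in>UNIV. \<Sum>c\<in>UNIV. \<Sum>j\<in>UNIV. ent P a b c * (Ma $ a $ i * Mb $ b $ j * Mc $ c $ k))"
      by (simp add: sum_distrib_left mult_ac)
    also have "\<dots> = T $ i $ k"
      unfolding T_def E vec_lambda_beta by (rule swap4[symmetric])
    finally show "(transpose Ma ** margB P ** Mc) $ i $ k = T $ i $ k" .
  qed
  have hZ: "transpose Mb ** margA P ** Mc = T"
  proof (simp add: vec_eq_iff, intro allI)
    fix j k
    have "(transpose Mb ** margA P ** Mc) $ j $ k = (\<Sum>c\<in>UNIV. \<Sum>b\<in>UNIV. \<Sum>a\<in>UNIV. ent P a b c * Mb $ b $ j * Mc $ c $ k)"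
      by (simp add: matrix_matrix_mult_def transpose_def margA_def sum_distrib_left sum_distrib_right mult_ac)
    also have "\<dots> = (\<Sum>c\<in>UNIV. \<Sum>a\<in>UNIV. \<Sum>b\<in>UNIV. ent P a b c * Mb $ b $ j * Mc $ c $ k)"
      by (rule sum.cong[OF refl], rule sum.swap)
    also have "\<dots> = (\<Sum>a\<in>UNIV. \<Sum>b\<in>UNIV. \<Sum>c\<in>UNIV. ent P a b c * Mb $ b $ j * Mc $ c $ k * (\<Sum>i\<in>UNIV. Ma $ a $ i))"
      by (subst swap3) (simp add: rA)
    also have "\<dots> = (\<Sum>a\<in>UNIV. \<Sum>b\<in>UNIV. \<Sum>c\<in>UNIV. \<Sum>i\<in>UNIV. ent P a b c * (Ma $ a $ i * Mb $ b $ j * Mc $ c $ k))"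
      by (simp add: sum_distrib_left mult_ac)
    also have "\<dots> = (\<Sum>i\<in>UNIV. ent Pt i j k)"
      unfolding E by (rule swap4[symmetric])
    also have "\<dots> = T $ j $ k"
      unfolding T_def by (simp add: sab)
    finally show "(transpose Mb ** margA P ** Mc) $ j $ k = T $ j $ k" .
  qed
  show "rank (skew3 (slice P k0) (margB P) (margA P)) \<le> 2 * CARD('k)
          \<and> rank (skew3 (transpose (margB P)) (transpose (margA P)) (slice P k0)) \<le> 2 * CARD('k)"
    by (rule core[OF iA iB iC sS sT hX hY hZ])
qed


end
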